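(* Let $n\ge3$ and $B_n=\langle a,b\mid ba=b^n\rangle$. 1. For every reduced atomic cancellative monoid $H$ whose monoid of relations $\sim_H$ is finitely generated, $\mathcal L(H)\ne\mathcal L(B_n)$. 2. $B_n$ is not a transfer Krull monoid.
   Context: $B_n$ is the monoid with generators $a,b$ and single relation $ba=b^n$ (reduced, atomic, unit-cancellative, with atoms $a,b$). For an atomic monoid $H$, $\mathsf L(y)$ is the set of $k$ with $y$ a product of $k$ atoms ($\mathsf L(\text{unit})=\{0\}$), $\mathcal L(H)=\{\mathsf L(y)\mid y\in H\}$. For reduced atomic $H$, $\mathsf Z(H)$ is the free monoid on the atoms (free abelian if $H$ is commutative), $\pi$ the canonical epimorphism, and $\sim_H=\{(x,y)\in\mathsf Z(H)^2\mid\pi(x)=\pi(y)\}$ the monoid of relations. For atomic unit-cancellative monoids $H,B$ (unit-cancellative: $x=xu$ or $x=ux$ implies $u$ a unit), a homomorphism $\theta:H\to B$ is a weak transfer homomorphism if (T1) $B=B^\times\theta(H)B^\times$ and $\theta^{-1}(B^\times)=H^\times$, and (WT2) whenever $a\in H$ and $\theta(a)=v_1\cdots v_r$ with atoms $v_i$ of $B$, there are atoms $u_1,\dots,u_r$ of $H$ and a permutation $\tau$ of $[1,r]$ with $a=u_1\cdots u_r$ and $\theta(u_i)\in B^\times v_{\tau(i)}B^\times$ for all $i$. A commutative monoid is Krull if its associated reduced monoid is a saturated submonoid of a free abelian monoid (a submonoid $S\subset D$ is saturated if $a\in D$, $b\in S$, $ab\in S$ imply $a\in S$). An atomic unit-cancellative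 monoid $H$ is transfer Krull if there exist a commutative Krull monoid $B$ and a weak transfer homomorphism $H\to B$. *)

theory Defs
  imports "HOL-Algebra.Group" "HOL-Library.Multiset"
begin

definition lprod :: "'a monoid \<Rightarrow> 'a list \<Rightarrow> 'a" where
  "lprod H xs = foldr (\<lambda>x acc. x \<otimes>\<^bsub>H\<^esub> acc) xs \<one>\<^bsub>H\<^esub>"

definition mon_atom :: "'a monoid \<Rightarrow> 'a \<Rightarrow> bool" where
  "mon_atom H u \<longleftrightarrow> u \<in> carrier H \<and> u \<notin> Units H \<and>
     (\<forall>x\<in>carrier H. \<forall>y\<in>carrier H. u = x \<otimes>\<^bsub>H\<^esub> y \<longrightarrow> x \<in> Units H \<or> y \<in> Units H)"

definition mon_atoms :: "'a monoid \<Rightarrow> 'a set" where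
  "mon_atoms H = {u. mon_atom H u}"

definition mon_reduced :: "'a monoid \<Rightarrow> bool" where
  "mon_reduced H \<longleftrightarrow> Units H = {\<one>\<^bsub>H\<^esub>}"

definition mon_atomic :: "'a monoid \<Rightarrow> bool" where
  "mon_atomic H \<longleftrightarrow> (\<forall>y \<in> carrier H - Units H.
     \<exists>us. set us \<subseteq> mon_atoms H \<and> lprod H us = y)"

definition mon_cancellative :: "'a monoid \<Rightarrow> bool" where
  "mon_cancellative H \<longleftrightarrow>
     (\<forall>a\<in>carrier H. \<forall>b\<in>carrier H. \<forall>c\<in>carrier H.
        (a \<otimes>\<^bsub>H\<^esub> b = a \<otimes>\<^bsub>H\<^esub> c \<longrightarrow> b = c) \<and>
        (b \<otimes>\<^bsub>H\<^esub> a = c \<otimes>\<^bsub>H\<^esub> a \<longrightarrow> b = c))"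

definition mon_unit_cancellative :: "'a monoid \<Rightarrow> bool" where
  "mon_unit_cancellative H \<longleftrightarrow>
     (\<forall>x\<in>carrier H. \<forall>u\<in>carrier H.
        (x = x \<otimes>\<^bsub>H\<^esub> u \<or> x = u \<otimes>\<^bsub>H\<^esub> x) \<longrightarrow> u \<in> Units H)"

definition lengths :: "'a monoid \<Rightarrow> 'a \<Rightarrow> nat set" where
  "lengths H y = (if y \<in> Units H then {0}
     else {k. \<exists>us. length us = k \<and> set us \<subseteq> mon_atoms H \<and> lprod H us = y})"

definition system_of_lengths :: "'a monoid \<Rightarrow> nat set set" where
  "system_of_lengths H = lengths H ` carrier H"

text \<open>Factorizations are words over the atoms (free monoid), resp. multisets of
  atoms (free abelian monoid) when H is commutative; pi is the product map.\<close>

definition rel_list :: "'a monoid \<Rightarrow> ('a list \<times> 'a list) set" where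
  "rel_list H = {(xs, ys). set xs \<subseteq> mon_atoms H \<and> set ys \<subseteq> mon_atoms H
                          \<and> lprod H xs = lprod H ys}"

definition rel_mset :: "'a monoid \<Rightarrow> ('a multiset \<times> 'a multiset) set" where
  "rel_mset H = {(mset xs, mset ys) | xs ys. (xs, ys) \<in> rel_list H}"

definition relations_fg :: "'a monoid \<Rightarrow> bool" where
  "relations_fg H \<longleftrightarrow>
     (if comm_monoid H then
        (\<exists>S. finite S \<and> S \<subseteq> rel_mset H \<and>
           (\<forall>p\<in>rel_mset H. \<exists>ps. set ps \<subseteq> S \<and>
               p = (sum_list (map fst ps), sum_list (map snd ps))))
      else
        (\<exists>S. finite S \<and> S \<subseteq> rel_list H \<and>
           (\<forall>p\<in>rel_list H. \<exists>ps. set ps \<subseteq> S \<and>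
               p = (concat (map fst ps), concat (map snd ps)))))"

datatype gen = Ga | Gb

inductive bn_cong :: "nat \<Rightarrow> gen list \<Rightarrow> gen list \<Rightarrow> bool" for n where
  base: "bn_cong n [Gb, Ga] (replicate n Gb)"
| refl: "bn_cong n u u"
| sym: "bn_cong n u v \<Longrightarrow> bn_cong n v u"
| trans: "bn_cong n u v \<Longrightarrow> bn_cong n v w \<Longrightarrow> bn_cong n u w"
| ctxt: "bn_cong n u v \<Longrightarrow> bn_cong n (x @ u @ y) (x @ v @ y)"

definition bn_class :: "nat \<Rightarrow> gen list \<Rightarrow> gen list set" where
  "bn_class n u = {w. bn_cong n w u}"

definition Bn :: "nat \<Rightarrow> gen list set monoid" where
  "Bn n = \<lparr> carrier = range (bn_class n),
            monoid.mult = (\<lambda>X Y. {w. \<exists>x\<in>X. \<exists>y\<in>Y. bn_cong n w (x @ y)}),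
            one = bn_class n [] \<rparr>"

definition mon_hom :: "'a monoid \<Rightarrow> 'b monoid \<Rightarrow> ('a \<Rightarrow> 'b) \<Rightarrow> bool" where
  "mon_hom H B f \<longleftrightarrow> (\<forall>x\<in>carrier H. f x \<in> carrier B) \<and> f \<one>\<^bsub>H\<^esub> = \<one>\<^bsub>B\<^esub> \<and>
     (\<forall>x\<in>carrier H. \<forall>y\<in>carrier H. f (x \<otimes>\<^bsub>H\<^esub> y) = f x \<otimes>\<^bsub>B\<^esub> f y)"

definition weak_transfer_hom :: "'a monoid \<Rightarrow> 'b monoid \<Rightarrow> ('a \<Rightarrow> 'b) \<Rightarrow> bool" where
  "weak_transfer_hom H B \<theta> \<longleftrightarrow>
     mon_hom H B \<theta> \<and>
     \<comment> \<open>(T1)\<close>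
     carrier B = {u \<otimes>\<^bsub>B\<^esub> \<theta> h \<otimes>\<^bsub>B\<^esub> v | u h v. u \<in> Units B \<and> h \<in> carrier H \<and> v \<in> Units B} \<and>
     {h \<in> carrier H. \<theta> h \<in> Units B} = Units H \<and>
     \<comment> \<open>(WT2)\<close>
     (\<forall>a\<in>carrier H. \<forall>vs. set vs \<subseteq> mon_atoms B \<and> \<theta> a = lprod B vs \<longrightarrow>
        (\<exists>us \<tau>. length us = length vs \<and> set us \<subseteq> mon_atoms H \<and> a = lprod H us \<and>
           bij_betw \<tau> {..<length vs} {..<length vs} \<and>
           (\<forall>i<length vs. \<exists>w\<in>Units B. \<exists>w'\<in>Units B.
              \<theta> (us ! i) = w \<otimes>\<^bsub>B\<^esub> (vs ! \<tau> i) \<otimes>\<^bsub>B\<^esub> w')))"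

text \<open>A commutative monoid B is Krull if its associated reduced monoid B/B^x is
  (isomorphic to) a saturated submonoid of a free abelian monoid F(P), P of type 'p.
  Equivalently: a homomorphism phi from B into F(P) whose fibres are exactly the
  classes of associated elements and whose image is saturated in F(P).\<close>
definition krull_monoid :: "'b monoid \<Rightarrow> 'p itself \<Rightarrow> bool" where
  "krull_monoid B _ \<longleftrightarrow> comm_monoid B \<and>
     (\<exists>(P :: 'p set) (\<phi> :: 'b \<Rightarrow> 'p multiset).
        (\<forall>x\<in>carrier B. set_mset (\<phi> x) \<subseteq> P) \<and>
        \<phi> \<one>\<^bsub>B\<^esub> = {#} \<and>
        (\<forall>x\<in>carrier B. \<forall>y\<in>carrier B. \<phi> (x \<otimes>\<^bsub>B\<^esub> y) = \<phi> x + \<phi> y) \<and>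
        (\<forall>x\<in>carrier B. \<forall>y\<in>carrier B. \<phi> x = \<phi> y \<longleftrightarrow> (\<exists>u\<in>Units B. x = y \<otimes>\<^bsub>B\<^esub> u)) \<and>
        (\<forall>a. set_mset a \<subseteq> P \<longrightarrow>
           (\<forall>y\<in>carrier B. a + \<phi> y \<in> \<phi> ` carrier B \<longrightarrow> a \<in> \<phi> ` carrier B)))"

text \<open>H is transfer Krull (witnessed with a Krull monoid of type 'b and a free abelian
  monoid with basis in type 'p).\<close>
definition transfer_krull :: "'a monoid \<Rightarrow> 'b itself \<Rightarrow> 'p itself \<Rightarrow> bool" where
  "transfer_krull H _ _ \<longleftrightarrow>
     monoid H \<and> mon_atomic H \<and> mon_unit_cancellative H \<and>
     (\<exists>(B :: 'b monoid) \<theta>. krull_monoid B TYPE('p) \<and> mon_atomic B \<and>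
        mon_unit_cancellative B \<and> weak_transfer_hom H B \<theta>)"

end

theory Submission
  imports Defs
begin

fun nf :: "nat \<Rightarrow> gen list \<Rightarrow> nat \<times> nat" where
  "nf n [] = (0,0)"
| "nf n (Ga # w) = (case nf n w of (i,j) \<Rightarrow> (Suc i, j))"
| "nf n (Gb # w) = (case nf n w of (i,j) \<Rightarrow> (0, Suc (i*(n-1) + j)))"

definition comb :: "nat \<Rightarrow> nat \<times> nat \<Rightarrow> nat \<times> nat \<Rightarrow> nat \<times> nat" where
  "comb n p q = (if snd p = 0 then (fst p + fst q, snd q) else (fst p, snd p + fst q * (n-1) + snd q))"

lemma nf_append: "nf n (u @ v) = comb n (nf n u) (nf n v)"
proof (induction u)
  case Nil then show ?case by (simp add: comb_def split: prod.splits)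
next
  case (Cons c u)
  then show ?case by (cases c) (auto simp: comb_def add_mult_distrib split: prod.splits)
qed

lemma nf_rep_b: "nf n (replicate m Gb) = (0, m)"
  by (induction m) auto

lemma cong_nf:
  assumes "1 \<le> n" shows "bn_cong n u v \<Longrightarrow> nf n u = nf n v"
proof (induction rule: bn_cong.induct)
  case base then show ?case using assms by (simp add: nf_rep_b)
next
  case (ctxt u v x y) then show ?case by (simp add: nf_append)
qed auto

lemma class_eq_nf: "1 \<le> n \<Longrightarrow> bn_class n u = bn_class n v \<Longrightarrow> nf n u = nf n v"
proof -
  assume "1 \<le> n" "bn_class n u = bn_class n v"
  then have "u \<in> bn_class n v" by (auto simp: bn_class_def intro: bn_cong.refl)
  then show ?thesis using cong_nf[OF \<open>1 \<le> n\<close>] by (simp add: bn_class_def)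
qed

lemma cong_class: "bn_cong n u v \<Longrightarrow> bn_class n u = bn_class n v"
  unfolding bn_class_def by (auto intro: bn_cong.trans bn_cong.sym)

lemma mult_class: "bn_class n u \<otimes>\<^bsub>Bn n\<^esub> bn_class n v = bn_class n (u @ v)"
proof -
  have "bn_cong n w (u @ v)" if "bn_cong n x u" "bn_cong n y v" "bn_cong n w (x @ y)" for w x y
  proof -
    have "bn_cong n ([] @ x @ y) ([] @ u @ y)" by (rule bn_cong.ctxt[OF that(1)])
    moreover have "bn_cong n (u @ y @ []) (u @ v @ [])" by (rule bn_cong.ctxt[OF that(2)])
    ultimately show ?thesis using that(3) by (auto intro: bn_cong.trans)
  qed
  then show ?thesis unfolding Bn_def bn_class_def
    by (auto intro: bn_cong.refl)
qed

lemma one_Bn: "\<one>\<^bsub>Bn n\<^esub> = bn_class n []" by (simp add: Bn_def)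
lemma carrier_Bn: "carrier (Bn n) = range (bn_class n)" by (simp add: Bn_def)

lemma nf_inv:
  assumes "2 \<le> n" "nf n w = (i,j)"
  shows "\<exists>t. length w + (n-2)*t = i + j \<and> (if j = 0 then t = 0 else (n-1)*t + 1 \<le> j)"
  using assms(2)
proof (induction w arbitrary: i j)
  case Nil then show ?case by auto
next
  case (Cons c w)
  obtain i' j' where e: "nf n w = (i',j')" by fastforce
  from Cons.IH[OF e] obtain t where t: "length w + (n-2)*t = i' + j'"
     "(if j' = 0 then t = 0 else (n-1)*t + 1 \<le> j')" by blast
  obtain m where m: "n = m + 2" using assms(1) by (metis add.commute le_Suc_ex)
  show ?case
  proof (cases c)
    case Ga
    then have "i = Suc i'" "j = j'" using Cons.prems e by auto
    then show ?thesis using t by (intro exI[of _ t]) auto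
  next
    case Gb
    then have ij: "i = 0" "j = Suc (i'*(n-1) + j')" using Cons.prems e by auto
    have "(m+1)*t \<le> j'" using t by (cases "j' = 0") (auto simp: m)
    then show ?thesis using t ij
      by (intro exI[of _ "t + i'"]) (auto simp: m algebra_simps)
  qed
qed

lemma nf_zero: "2 \<le> n \<Longrightarrow> nf n w = (0,0) \<Longrightarrow> w = []"
  using nf_inv[of n w 0 0] by auto

lemma len_01: assumes "2 \<le> n" "nf n w = (0,1)" shows "length w = 1"
proof -
  obtain t where "length w + (n-2)*t = 1" "(n-1)*t + 1 \<le> 1" using nf_inv[OF assms] by auto
  then show ?thesis using assms(1) by auto
qed

lemma len_10: assumes "2 \<le> n" "nf n w = (1,0)" shows "length w = 1"
  using nf_inv[OF assms] by auto

lemma len_11: assumes "2 \<le> n" "nf n w = (1,1)" shows "length w = 2"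
proof -
  from nf_inv[OF assms] obtain t where t: "length w + (n-2)*t = 1 + 1" "(n-1)*t + 1 \<le> 1" by auto
  have "t = 0" using t(2) assms(1) by (cases t) auto
  then show ?thesis using t(1) by simp
qed

lemma len_bound:
  assumes "2 \<le> n" "nf n w1 = nf n w2" "1 \<le> length w1"
  shows "length w2 + (n-2) \<le> (n-1)*length w1"
proof -
  obtain i j where e: "nf n w1 = (i,j)" by fastforce
  obtain t1 where t1: "length w1 + (n-2)*t1 = i + j" "(if j = 0 then t1 = 0 else (n-1)*t1 + 1 \<le> j)"
    using nf_inv[OF assms(1) e] by blast
  obtain t2 where t2: "length w2 + (n-2)*t2 = i + j"
    using nf_inv[OF assms(1)] e assms(2) by metis
  obtain m where m: "n = m + 2" using assms(1) by (metis add.commute le_Suc_ex)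
  show ?thesis
  proof (cases "j = 0")
    case True
    then have "length w1 = i" "length w2 \<le> i" using t1 t2 by auto
    moreover have "m * 1 \<le> m * i" using assms(3) \<open>length w1 = i\<close> by (intro mult_le_mono2) simp
    moreover have "(m+1)*i = i + m*i" by simp
    ultimately have "length w2 + m \<le> (m+1)*i" by linarith
    then show ?thesis using \<open>length w1 = i\<close> by (simp add: m)
  next
    case False
    then have h: "(m+1)*t1 + 1 \<le> j" using t1 by (simp add: m)
    have t1': "length w1 + m*t1 = i + j" using t1(1) by (simp add: m)
    have "(m+1)*(length w1 + m*t1) = (m+1)*(i+j)" using t1' by simp
    moreover have "(m+1)*(length w1 + m*t1) = (m+1)*length w1 + m*((m+1)*t1)"
      by (simp add: algebra_simps)
    ultimately have e1: "(m+1)*length w1 + m*((m+1)*t1) = (m+1)*(i+j)" by simp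
    have e2: "m*((m+1)*t1 + 1) \<le> m*j" using h by (rule mult_le_mono2)
    have d1: "(m+1)*(i+j) = i + j + m*i + m*j" by (simp add: algebra_simps)
    have d2: "m*((m+1)*t1 + 1) = m*((m+1)*t1) + m" by simp
    have L2: "length w2 \<le> i + j" using t2 by linarith
    have "length w2 + m \<le> (m+1)*length w1" using e1 e2 d1 d2 L2 by linarith
    then show ?thesis by (simp add: m)
  qed
qed


lemma lprod_Nil[simp]: "lprod H [] = \<one>\<^bsub>H\<^esub>" by (simp add: lprod_def)
lemma lprod_Cons[simp]: "lprod H (x # xs) = x \<otimes>\<^bsub>H\<^esub> lprod H xs" by (simp add: lprod_def)

lemma units_Bn: assumes "2 \<le> n" shows "bn_class n w \<in> Units (Bn n) \<longleftrightarrow> w = []"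
proof
  assume "bn_class n w \<in> Units (Bn n)"
  then obtain v where "bn_class n w \<otimes>\<^bsub>Bn n\<^esub> bn_class n v = \<one>\<^bsub>Bn n\<^esub>"
    unfolding Units_def carrier_Bn by auto
  then have "bn_class n (w @ v) = bn_class n []" by (simp add: mult_class one_Bn)
  then have "nf n (w @ v) = nf n []" by (rule class_eq_nf[rotated]) (use assms in simp)
  then show "w = []" using nf_zero[OF assms, of "w @ v"] by simp
next
  assume "w = []"
  then show "bn_class n w \<in> Units (Bn n)"
    unfolding Units_def carrier_Bn by (auto simp: mult_class one_Bn)
qed

lemma atom_Bn_letter: assumes "2 \<le> n" "mon_atom (Bn n) X" shows "\<exists>c. X = bn_class n [c]"
proof -
  obtain w where X: "X = bn_class n w" using assms(2) by (auto simp: mon_atom_def carrier_Bn)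
  have "w \<noteq> []" using assms X units_Bn[OF assms(1)] by (auto simp: mon_atom_def)
  then obtain c w' where w: "w = c # w'" by (cases w) auto
  have "X = bn_class n [c] \<otimes>\<^bsub>Bn n\<^esub> bn_class n w'" by (simp add: X w mult_class)
  then have "bn_class n [c] \<in> Units (Bn n) \<or> bn_class n w' \<in> Units (Bn n)"
    using assms(2) unfolding mon_atom_def carrier_Bn by blast
  then have "w' = []" using units_Bn[OF assms(1)] by auto
  then show ?thesis using X w by auto
qed

lemma len_letter: assumes "2 \<le> n" "nf n w = nf n [c]" shows "length w = 1"
  using assms len_01[OF assms(1)] len_10[OF assms(1)] by (cases c) auto

lemma letter_atom: assumes "2 \<le> n" shows "mon_atom (Bn n) (bn_class n [c])"
  unfolding mon_atom_def
proof (intro conjI ballI impI)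
  show "bn_class n [c] \<in> carrier (Bn n)" by (simp add: carrier_Bn)
  show "bn_class n [c] \<notin> Units (Bn n)" using units_Bn[OF assms] by simp
  fix x y assume "x \<in> carrier (Bn n)" "y \<in> carrier (Bn n)" and e: "bn_class n [c] = x \<otimes>\<^bsub>Bn n\<^esub> y"
  then obtain u v where x: "x = bn_class n u" and y: "y = bn_class n v" by (auto simp: carrier_Bn)
  have "bn_class n (u @ v) = bn_class n [c]" using e by (simp add: x y mult_class)
  then have "nf n (u @ v) = nf n [c]" by (rule class_eq_nf[rotated]) (use assms in simp)
  then have "length (u @ v) = 1" using len_letter[OF assms] by blast
  then have "u = [] \<or> v = []" by (cases u; cases v) auto
  then show "x \<in> Units (Bn n) \<or> y \<in> Units (Bn n)" using units_Bn[OF assms] x y by auto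
qed

lemma lprod_atoms_Bn: assumes "2 \<le> n" shows "set xs \<subseteq> mon_atoms (Bn n) \<Longrightarrow>
   \<exists>w. length w = length xs \<and> lprod (Bn n) xs = bn_class n w"
proof (induction xs)
  case Nil then show ?case by (auto simp: one_Bn)
next
  case (Cons x xs)
  then obtain w where w: "length w = length xs" "lprod (Bn n) xs = bn_class n w" by auto
  obtain c where "x = bn_class n [c]" using Cons.prems atom_Bn_letter[OF assms] by (auto simp: mon_atoms_def)
  then show ?case using w by (intro exI[of _ "c # w"]) (simp add: mult_class)
qed

lemma lprod_word: "lprod (Bn n) (map (\<lambda>c. bn_class n [c]) w) = bn_class n w"
  by (induction w) (auto simp: one_Bn mult_class)

lemma word_atoms: "2 \<le> n \<Longrightarrow> set (map (\<lambda>c. bn_class n [c]) w) \<subseteq> mon_atoms (Bn n)"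
  using letter_atom by (auto simp: mon_atoms_def)

lemma lengths_Bn_D: assumes "2 \<le> n" "w \<noteq> []" "k \<in> lengths (Bn n) (bn_class n w)"
  shows "\<exists>w'. length w' = k \<and> nf n w' = nf n w"
proof -
  obtain us where "length us = k" "set us \<subseteq> mon_atoms (Bn n)" "lprod (Bn n) us = bn_class n w"
  proof -
    have "bn_class n w \<notin> Units (Bn n)" using assms units_Bn[OF assms(1)] by simp
    then show ?thesis using assms(3) that unfolding lengths_def by auto
  qed
  then obtain w' where "length w' = k" "bn_class n w' = bn_class n w"
    using lprod_atoms_Bn[OF assms(1)] by metis
  moreover have "nf n w' = nf n w" by (rule class_eq_nf[rotated, OF calculation(2)]) (use assms in simp)
  ultimately show ?thesis by auto
qed

lemma lengths_Bn_I: assumes "2 \<le> n" "w \<noteq> []" "bn_class n w' = bn_class n w"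
  shows "length w' \<in> lengths (Bn n) (bn_class n w)"
proof -
  have "bn_class n w \<notin> Units (Bn n)" using assms units_Bn[OF assms(1)] by simp
  then have L: "lengths (Bn n) (bn_class n w) = {k. \<exists>us. length us = k \<and> set us \<subseteq> mon_atoms (Bn n) \<and> lprod (Bn n) us = bn_class n w}"
    unfolding lengths_def by simp
  show ?thesis unfolding L
    using word_atoms[OF assms(1), of w'] lprod_word[of n w'] assms(3)
    by (intro CollectI exI[of _ "map (\<lambda>c. bn_class n [c]) w'"]) simp
qed

lemma cong_ba: assumes "1 \<le> n"
  shows "bn_cong n (Gb # replicate i Ga @ w) (replicate (1 + i*(n-1)) Gb @ w)"
proof (induction i)
  case 0 then show ?case by (simp add: bn_cong.refl)
next
  case (Suc i)
  have r: "replicate n Gb = replicate (n-1) Gb @ [Gb]"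
  proof -
    obtain k where "n = Suc k" using assms by (cases n) auto
    then show ?thesis by (simp add: replicate_append_same)
  qed
  have "bn_cong n ([] @ [Gb, Ga] @ (replicate i Ga @ w)) ([] @ replicate n Gb @ (replicate i Ga @ w))"
    by (rule bn_cong.ctxt[OF bn_cong.base])
  then have 1: "bn_cong n (Gb # replicate (Suc i) Ga @ w) (replicate (n-1) Gb @ (Gb # replicate i Ga @ w))"
    by (simp add: r)
  have 2: "bn_cong n (replicate (n-1) Gb @ (Gb # replicate i Ga @ w) @ [])
       (replicate (n-1) Gb @ (replicate (1 + i*(n-1)) Gb @ w) @ [])"
    by (rule bn_cong.ctxt[OF Suc.IH])
  have c2: "bn_cong n (replicate (n-1) Gb @ (Gb # replicate i Ga @ w))
       (replicate (n-1) Gb @ replicate (1 + i*(n-1)) Gb @ w)"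
    using 2 by (simp only: append_Nil2)
  have c3: "bn_cong n (Gb # replicate (Suc i) Ga @ w) (replicate (n-1) Gb @ replicate (1 + i*(n-1)) Gb @ w)"
    by (rule bn_cong.trans[OF 1 c2])
  have eq: "replicate (n-1) Gb @ replicate (1 + i*(n-1)) Gb @ w = replicate (1 + Suc i*(n-1)) Gb @ w"
  proof -
    have "replicate (n-1) Gb @ replicate (1+i*(n-1)) Gb = replicate ((n-1) + (1+i*(n-1))) Gb"
      by (rule replicate_add[symmetric])
    moreover have "(n-1) + (1+i*(n-1)) = 1 + Suc i*(n-1)" by simp
    ultimately show ?thesis by (metis append_assoc)
  qed
  show ?case using c3 unfolding eq .
qed


lemma arith_L1:
  fixes qs :: "(nat \<times> nat) list"
  assumes "\<forall>q\<in>set qs. snd q + m*(if fst q = 0 then 0 else 1) \<le> (m+1)*fst q"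
  shows "sum_list (map snd qs) + m*length (filter (\<lambda>q. fst q \<noteq> 0) qs) \<le> (m+1)*sum_list (map fst qs)"
  using assms
proof (induction qs)
  case Nil then show ?case by simp
next
  case (Cons q qs)
  then have h: "snd q + m*(if fst q = 0 then 0 else 1) \<le> (m+1)*fst q"
    and ih: "sum_list (map snd qs) + m*length (filter (\<lambda>q. fst q \<noteq> 0) qs) \<le> (m+1)*sum_list (map fst qs)"
    by auto
  show ?case
  proof (cases "fst q = 0")
    case True then show ?thesis using h ih by (simp add: algebra_simps)
  next
    case False then show ?thesis using h ih by (simp add: algebra_simps)
  qed
qed

lemma arith_L2:
  fixes qs :: "(nat \<times> nat) list"
  assumes "\<forall>q\<in>set qs. fst q \<le> M"
  shows "sum_list (map fst qs) \<le> M*length (filter (\<lambda>q. fst q \<noteq> 0) qs)"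
  using assms by (induction qs) (auto simp: algebra_simps)

lemma arith_final:
  fixes qs :: "(nat \<times> nat) list"
  assumes "\<forall>q\<in>set qs. snd q + m*(if fst q = 0 then 0 else 1) \<le> (m+1)*fst q \<and> fst q \<le> M"
    "sum_list (map fst qs) = M+1" "sum_list (map snd qs) = 1 + M*(m+1)" "1 \<le> m"
  shows False
proof -
  define c where "c = length (filter (\<lambda>q. fst q \<noteq> 0) qs)"
  have L1: "sum_list (map snd qs) + m*c \<le> (m+1)*sum_list (map fst qs)"
    unfolding c_def by (rule arith_L1) (use assms(1) in auto)
  have L2: "sum_list (map fst qs) \<le> M*c"
    unfolding c_def by (rule arith_L2) (use assms(1) in auto)
  have "2 \<le> c"
  proof (rule ccontr)
    assume "\<not> 2 \<le> c"
    then have "c = 0 \<or> c = 1" by auto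
    then show False using L2 assms(2) by auto
  qed
  then have "m*2 \<le> m*c" by (rule mult_le_mono2)
  moreover have "1 + M*(m+1) + m*c \<le> (m+1)*(M+1)" using L1 assms(2,3) by simp
  moreover have "(m+1)*(M+1) = M*(m+1) + m + 1" by (simp add: algebra_simps)
  ultimately show False using assms(4) by linarith
qed

lemma lprod_carrier: "monoid H \<Longrightarrow> set xs \<subseteq> carrier H \<Longrightarrow> lprod H xs \<in> carrier H"
  by (induction xs) (auto intro: monoid.m_closed monoid.one_closed)

lemma part1:
  assumes n3: "3 \<le> n" and H: "monoid H" "mon_reduced H" "mon_cancellative H" "relations_fg H"
    and eq: "system_of_lengths H = system_of_lengths (Bn n)"
  shows False
proof -
  have n2: "2 \<le> n" using n3 by simp
  obtain m where m: "n = m + 2" using n2 by (metis add.commute le_Suc_ex)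
  have m1: "1 \<le> m" using n3 m by simp
  have atoms_carrier: "mon_atoms H \<subseteq> carrier H" by (auto simp: mon_atoms_def mon_atom_def)
  have units: "Units H = {\<one>\<^bsub>H\<^esub>}" using H(2) by (simp add: mon_reduced_def)
  have nonunit: "lprod H xs \<noteq> \<one>\<^bsub>H\<^esub>" if xs: "set xs \<subseteq> mon_atoms H" "xs \<noteq> []" for xs
  proof
    assume e: "lprod H xs = \<one>\<^bsub>H\<^esub>"
    obtain u r where ur: "xs = u # r" using xs by (cases xs) auto
    have ua: "mon_atom H u" using xs ur by (auto simp: mon_atoms_def)
    have uc: "u \<in> carrier H" using ua by (simp add: mon_atom_def)
    have pc: "lprod H r \<in> carrier H" using lprod_carrier[OF H(1), of r] xs ur atoms_carrier by auto
    have up: "u \<otimes>\<^bsub>H\<^esub> lprod H r = \<one>\<^bsub>H\<^esub>" using e ur by simp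
    have "u \<otimes>\<^bsub>H\<^esub> (lprod H r \<otimes>\<^bsub>H\<^esub> u) = u \<otimes>\<^bsub>H\<^esub> \<one>\<^bsub>H\<^esub>"
      using up uc pc H(1) by (simp add: monoid.m_assoc[symmetric] monoid.l_one monoid.r_one)
    then have pu: "lprod H r \<otimes>\<^bsub>H\<^esub> u = \<one>\<^bsub>H\<^esub>"
      using H(3) uc pc H(1) unfolding mon_cancellative_def
      by (meson monoid.m_closed monoid.one_closed)
    have "u \<in> Units H" unfolding Units_def using uc pc up pu by auto
    then show False using ua by (simp add: mon_atom_def)
  qed
  have relbound: "length ys + m*(if xs = [] then 0 else 1) \<le> (m+1)*length xs"
    if r: "(xs,ys) \<in> rel_list H" for xs ys
  proof -
    have xa: "set xs \<subseteq> mon_atoms H" and ya: "set ys \<subseteq> mon_atoms H" and pe: "lprod H xs = lprod H ys"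
      using r by (auto simp: rel_list_def)
    show ?thesis
    proof (cases "xs = []")
      case True
      then have "lprod H ys = \<one>\<^bsub>H\<^esub>" using pe by simp
      then have "ys = []" using nonunit[OF ya] by auto
      then show ?thesis using True by simp
    next
      case False
      define y where "y = lprod H xs"
      have yc: "y \<in> carrier H" unfolding y_def using lprod_carrier[OF H(1)] xa atoms_carrier by auto
      have yu: "y \<notin> Units H" using nonunit[OF xa False] units unfolding y_def by auto
      have Ly: "lengths H y = {k. \<exists>us. length us = k \<and> set us \<subseteq> mon_atoms H \<and> lprod H us = y}"
        using yu by (simp add: lengths_def)
      have l1: "length xs \<in> lengths H y" unfolding Ly using xa y_def by auto
      have l2: "length ys \<in> lengths H y" unfolding Ly using ya y_def pe by auto
      have "lengths H y \<in> system_of_lengths H" using yc by (simp add: system_of_lengths_def)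
      then have "lengths H y \<in> system_of_lengths (Bn n)" by (simp only: eq)
      then obtain w where w: "lengths H y = lengths (Bn n) (bn_class n w)"
        by (auto simp: system_of_lengths_def carrier_Bn)
      have wne: "w \<noteq> []"
      proof
        assume "w = []"
        then have "lengths (Bn n) (bn_class n w) = {0}" using units_Bn[OF n2] by (simp add: lengths_def)
        then show False using l1 w False by simp
      qed
      obtain w1 where w1: "length w1 = length xs" "nf n w1 = nf n w"
        using lengths_Bn_D[OF n2 wne] l1 w by metis
      obtain w2 where w2: "length w2 = length ys" "nf n w2 = nf n w"
        using lengths_Bn_D[OF n2 wne] l2 w by metis
      have "length w2 + (n-2) \<le> (n-1)*length w1"
        by (rule len_bound[OF n2]) (use w1 w2 False in \<open>auto simp: Suc_le_eq\<close>)
      then show ?thesis using w1 w2 False by (simp add: m)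
    qed
  qed
  have exist: "\<exists>xs ys. (xs,ys) \<in> rel_list H \<and> length xs = s \<and> length ys = 1 + (s-1)*(m+1)"
    if s: "1 \<le> s" for s
  proof -
    define w where "w = Gb # replicate (s-1) Ga"
    define X where "X = bn_class n w"
    have wne: "w \<noteq> []" by (simp add: w_def)
    have lw: "length w = s" using s by (simp add: w_def)
    have l1: "s \<in> lengths (Bn n) X" unfolding X_def using lengths_Bn_I[OF n2 wne, of w] lw by simp
    have "bn_cong n (Gb # replicate (s-1) Ga @ []) (replicate (1 + (s-1)*(n-1)) Gb @ [])"
      by (rule cong_ba) (use n2 in simp)
    then have ce: "bn_class n (replicate (1 + (s-1)*(n-1)) Gb) = bn_class n w"
      unfolding w_def by (simp add: cong_class)
    have l2: "1 + (s-1)*(m+1) \<in> lengths (Bn n) X"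
      unfolding X_def using lengths_Bn_I[OF n2 wne ce] by (simp add: m)
    have "lengths (Bn n) X \<in> system_of_lengths (Bn n)"
      by (simp add: system_of_lengths_def carrier_Bn X_def)
    then have "lengths (Bn n) X \<in> system_of_lengths H" by (simp only: eq)
    then obtain y where y: "y \<in> carrier H" "lengths H y = lengths (Bn n) X"
      by (auto simp: system_of_lengths_def)
    have yu: "y \<notin> Units H"
    proof
      assume "y \<in> Units H"
      then have "lengths H y = {0}" by (simp add: lengths_def)
      then show False using l1 y s by simp
    qed
    have Ly: "lengths H y = {k. \<exists>us. length us = k \<and> set us \<subseteq> mon_atoms H \<and> lprod H us = y}"
      using yu by (simp add: lengths_def)
    obtain xs where xs: "length xs = s" "set xs \<subseteq> mon_atoms H" "lprod H xs = y"
      using l1 y(2) unfolding Ly by auto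
    obtain ys where ys: "length ys = 1 + (s-1)*(m+1)" "set ys \<subseteq> mon_atoms H" "lprod H ys = y"
      using l2 y(2) unfolding Ly by auto
    show ?thesis using xs ys by (intro exI[of _ xs] exI[of _ ys]) (auto simp: rel_list_def)
  qed
  show False
  proof (cases "comm_monoid H")
    case True
    then obtain S where S: "finite S" "S \<subseteq> rel_mset H"
      "\<forall>p\<in>rel_mset H. \<exists>ps. set ps \<subseteq> S \<and> p = (sum_list (map fst ps), sum_list (map snd ps))"
      using H(4) by (auto simp: relations_fg_def)
    have fin: "finite ((\<lambda>p. size (fst p)) ` S)" using S(1) by simp
    define M where "M = Max ((\<lambda>p. size (fst p)) ` S)"
    have M: "\<forall>p\<in>S. size (fst p) \<le> M" unfolding M_def using fin by (auto intro: Max_ge)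
    obtain xs ys where r: "(xs,ys) \<in> rel_list H" "length xs = M+1" "length ys = 1 + M*(m+1)"
      using exist[of "M+1"] by auto
    then have "(mset xs, mset ys) \<in> rel_mset H" by (auto simp: rel_mset_def)
    then obtain ps where ps: "set ps \<subseteq> S" "(mset xs, mset ys) = (sum_list (map fst ps), sum_list (map snd ps))"
      using S(3) by blast
    have sz: "size (sum_list (map f ps)) = sum_list (map (\<lambda>p. size (f p)) ps)" for f :: "_ \<Rightarrow> 'a multiset"
      by (induction ps) auto
    define qs where "qs = map (\<lambda>p. (size (fst p), size (snd p))) ps"
    show False
    proof (rule arith_final[of qs m M])
      show "\<forall>q\<in>set qs. snd q + m*(if fst q = 0 then 0 else 1) \<le> (m+1)*fst q \<and> fst q \<le> M"
      proof
        fix q assume "q \<in> set qs"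
        then obtain p where p: "p \<in> set ps" "q = (size (fst p), size (snd p))" by (auto simp: qs_def)
        have pS: "p \<in> S" using p ps by auto
        then obtain a b where ab: "p = (mset a, mset b)" "(a,b) \<in> rel_list H"
          using S(2) by (auto simp: rel_mset_def)
        show "snd q + m*(if fst q = 0 then 0 else 1) \<le> (m+1)*fst q \<and> fst q \<le> M"
          using relbound[OF ab(2)] M pS p ab by auto
      qed
      show "sum_list (map fst qs) = M+1"
        using ps(2) sz[of fst] r(2) by (simp add: qs_def o_def) (metis size_mset)
      show "sum_list (map snd qs) = 1 + M*(m+1)"
        using ps(2) sz[of snd] r(3) by (simp add: qs_def o_def) (metis size_mset)
      show "1 \<le> m" by (rule m1)
    qed
  next
    case False
    then obtain S where S: "finite S" "S \<subseteq> rel_list H"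
      "\<forall>p\<in>rel_list H. \<exists>ps. set ps \<subseteq> S \<and> p = (concat (map fst ps), concat (map snd ps))"
      using H(4) by (auto simp: relations_fg_def)
    have fin: "finite ((\<lambda>p. length (fst p)) ` S)" using S(1) by simp
    define M where "M = Max ((\<lambda>p. length (fst p)) ` S)"
    have M: "\<forall>p\<in>S. length (fst p) \<le> M" unfolding M_def using fin by (auto intro: Max_ge)
    obtain xs ys where r: "(xs,ys) \<in> rel_list H" "length xs = M+1" "length ys = 1 + M*(m+1)"
      using exist[of "M+1"] by auto
    then obtain ps where ps: "set ps \<subseteq> S" "(xs, ys) = (concat (map fst ps), concat (map snd ps))"
      using S(3) by blast
    have sz: "length (concat (map f ps)) = sum_list (map (\<lambda>p. length (f p)) ps)" for f :: "_ \<Rightarrow> 'a list"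
      by (induction ps) auto
    define qs where "qs = map (\<lambda>p. (length (fst p), length (snd p))) ps"
    show False
    proof (rule arith_final[of qs m M])
      show "\<forall>q\<in>set qs. snd q + m*(if fst q = 0 then 0 else 1) \<le> (m+1)*fst q \<and> fst q \<le> M"
      proof
        fix q assume "q \<in> set qs"
        then obtain p where p: "p \<in> set ps" "q = (length (fst p), length (snd p))" by (auto simp: qs_def)
        have pS: "p \<in> S" using p ps by auto
        then have "(fst p, snd p) \<in> rel_list H" using S(2) by auto
        then show "snd q + m*(if fst q = 0 then 0 else 1) \<le> (m+1)*fst q \<and> fst q \<le> M"
          using relbound M pS p by auto
      qed
      show "sum_list (map fst qs) = M+1"
        using ps(2) sz[of fst] r(2) by (simp add: qs_def o_def)
      show "sum_list (map snd qs) = 1 + M*(m+1)"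
        using ps(2) sz[of snd] r(3) by (simp add: qs_def o_def)
      show "1 \<le> m" by (rule m1)
    qed
  qed
qed


lemma theta_word: assumes "mon_hom (Bn n) B \<theta>"
  shows "\<theta> (bn_class n w) = lprod B (map (\<lambda>c. \<theta> (bn_class n [c])) w)"
proof (induction w)
  case Nil then show ?case using assms by (simp add: mon_hom_def one_Bn)
next
  case (Cons c w)
  have "bn_class n (c # w) = bn_class n [c] \<otimes>\<^bsub>Bn n\<^esub> bn_class n w" by (simp add: mult_class)
  then have "\<theta> (bn_class n (c # w)) = \<theta> (bn_class n [c]) \<otimes>\<^bsub>B\<^esub> \<theta> (bn_class n w)"
    using assms by (simp add: mon_hom_def carrier_Bn)
  then show ?case using Cons by simp
qed

lemma part2: assumes n3: "3 \<le> n" shows "\<not> transfer_krull (Bn n) TYPE('b) TYPE('p)"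
proof
  have n2: "2 \<le> n" using n3 by simp
  assume "transfer_krull (Bn n) TYPE('b) TYPE('p)"
  then obtain B :: "'b monoid" and \<theta> where kr: "krull_monoid B TYPE('p)" and at: "mon_atomic B"
    and wt: "weak_transfer_hom (Bn n) B \<theta>"
    unfolding transfer_krull_def by blast
  have cm: "comm_monoid B" using kr by (simp add: krull_monoid_def)
  then have mB: "monoid B" by (rule comm_monoid.axioms(1))
  have hom: "mon_hom (Bn n) B \<theta>" and T1: "{h \<in> carrier (Bn n). \<theta> h \<in> Units B} = Units (Bn n)"
    and WT2: "\<forall>a\<in>carrier (Bn n). \<forall>vs. set vs \<subseteq> mon_atoms B \<and> \<theta> a = lprod B vs \<longrightarrow>
        (\<exists>us \<tau>. length us = length vs \<and> set us \<subseteq> mon_atoms (Bn n) \<and> a = lprod (Bn n) us \<and>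
           bij_betw \<tau> {..<length vs} {..<length vs} \<and>
           (\<forall>i<length vs. \<exists>w\<in>Units B. \<exists>w'\<in>Units B.
              \<theta> (us ! i) = w \<otimes>\<^bsub>B\<^esub> (vs ! \<tau> i) \<otimes>\<^bsub>B\<^esub> w'))"
    using wt unfolding weak_transfer_hom_def by blast+
  have WT2': "\<exists>us. length us = length vs \<and> set us \<subseteq> mon_atoms (Bn n) \<and> a = lprod (Bn n) us"
    if "a \<in> carrier (Bn n)" "set vs \<subseteq> mon_atoms B" "\<theta> a = lprod B vs" for a vs
    using WT2 that by blast
  have lenw: "length us = k" if "length us = k" "set us \<subseteq> mon_atoms (Bn n)" "bn_class n u = lprod (Bn n) us"
     for us u k using that by simp
  define a where "a = bn_class n [Ga]"
  define b where "b = bn_class n [Gb]"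
  have ac: "a \<in> carrier (Bn n)" and bc: "b \<in> carrier (Bn n)" by (simp_all add: a_def b_def carrier_Bn)
  have bu: "b \<notin> Units (Bn n)" using units_Bn[OF n2] by (simp add: b_def)
  have tac: "\<theta> a \<in> carrier B" and tbc: "\<theta> b \<in> carrier B" using hom ac bc by (auto simp: mon_hom_def)
  have tbu: "\<theta> b \<notin> Units B" using T1 bc bu by blast
  obtain vs0 where vs0: "set vs0 \<subseteq> mon_atoms B" "lprod B vs0 = \<theta> b"
    using at tbc tbu unfolding mon_atomic_def by blast
  obtain us where us: "length us = length vs0" "set us \<subseteq> mon_atoms (Bn n)" "b = lprod (Bn n) us"
    using WT2'[OF bc vs0(1) vs0(2)[symmetric]] by blast
  obtain w where w: "length w = length us" "lprod (Bn n) us = bn_class n w"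
    using lprod_atoms_Bn[OF n2 us(2)] by blast
  have "bn_class n w = bn_class n [Gb]" using w us by (simp add: b_def)
  then have "nf n w = nf n [Gb]" by (rule class_eq_nf[rotated]) (use n2 in simp)
  then have "length w = 1" using len_01[OF n2] by simp
  then obtain v where v: "vs0 = [v]" using w us by (cases vs0) auto
  have vc: "v \<in> carrier B" using vs0 v by (auto simp: mon_atoms_def mon_atom_def)
  have tb: "\<theta> b = v" using vs0(2) v vc mB by (simp add: monoid.r_one)
  have e1: "\<theta> (bn_class n [Ga, Gb]) = \<theta> a \<otimes>\<^bsub>B\<^esub> (\<theta> b \<otimes>\<^bsub>B\<^esub> \<one>\<^bsub>B\<^esub>)"
    using theta_word[OF hom, of "[Ga,Gb]"] by (simp add: a_def b_def)
  have e2: "\<theta> (bn_class n [Gb, Ga]) = \<theta> b \<otimes>\<^bsub>B\<^esub> (\<theta> a \<otimes>\<^bsub>B\<^esub> \<one>\<^bsub>B\<^esub>)"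
    using theta_word[OF hom, of "[Gb,Ga]"] by (simp add: a_def b_def)
  have e3: "\<theta> (bn_class n [Ga, Gb]) = \<theta> (bn_class n [Gb, Ga])"
    unfolding e1 e2 using tac tbc cm mB by (simp add: monoid.r_one comm_monoid.m_comm)
  have "bn_class n [Gb, Ga] = bn_class n (replicate n Gb)" by (rule cong_class[OF bn_cong.base])
  then have "\<theta> (bn_class n [Ga, Gb]) = lprod B (map (\<lambda>c. \<theta> (bn_class n [c])) (replicate n Gb))"
    using e3 theta_word[OF hom, of "replicate n Gb"] by simp
  then have e4: "\<theta> (bn_class n [Ga, Gb]) = lprod B (replicate n v)"
    using tb by (simp add: b_def map_replicate_const)
  have vat: "set (replicate n v) \<subseteq> mon_atoms B" using vs0 v by auto
  have abc: "bn_class n [Ga, Gb] \<in> carrier (Bn n)" by (simp add: carrier_Bn)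
  obtain us2 where us2: "length us2 = n" "set us2 \<subseteq> mon_atoms (Bn n)" "bn_class n [Ga, Gb] = lprod (Bn n) us2"
    using WT2'[OF abc vat e4] by auto
  obtain w2 where w2: "length w2 = length us2" "lprod (Bn n) us2 = bn_class n w2"
    using lprod_atoms_Bn[OF n2 us2(2)] by blast
  have "bn_class n w2 = bn_class n [Ga, Gb]" using w2 us2 by simp
  then have "nf n w2 = nf n [Ga, Gb]" by (rule class_eq_nf[rotated]) (use n2 in simp)
  then have "length w2 = 2" using len_11[OF n2] by simp
  then show False using w2 us2 n3 by simp
qed

theorem corollary4p4:
  fixes n :: nat
  assumes "n \<ge> 3"
  shows "(\<forall>H :: 'a monoid. monoid H \<and> mon_reduced H \<and> mon_atomic H \<and> mon_cancellative H
            \<and> relations_fg H \<longrightarrow> system_of_lengths H \<noteq> system_of_lengths (Bn n))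
       \<and> \<not> transfer_krull (Bn n) TYPE('b) TYPE('p)"
proof (intro conjI allI impI)
  fix H :: "'a monoid"
  assume "monoid H \<and> mon_reduced H \<and> mon_atomic H \<and> mon_cancellative H \<and> relations_fg H"
  then show "system_of_lengths H \<noteq> system_of_lengths (Bn n)"
    using part1[OF assms] by blast
next
  show "\<not> transfer_krull (Bn n) TYPE('b) TYPE('p)" by (rule part2[OF assms])
qed

end
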